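(* Let $\mathbf{k}$ be an algebraically closed field, $V=\mathbf{k}^n$, $G=\mathrm{GL}(V)$, $\underline{G}=G\ltimes V$. Let $\lambda[q]$ be an enhanced partition of $n$, $\lambda=(a_1\ge\dots\ge a_t>0)$, let $X$ be nilpotent of Jordan type $\lambda$ with Jordan basis $\{X^kv_i:1\le i\le t,0\le k\le a_i-1\}$ ($X^{a_i}v_i=0$), and put $$\hat w=\sum_{i=1}^{q}\sum_{k=1}^{a_i-1}X^kv_i+\sum_{i=q+1}^{t}\sum_{k=0}^{a_i-1}X^kv_i.$$ Then $\overline{\mathcal{O}_{\lambda[q]}}=\overline{G\cdot(X,\hat w)}$, where $G\cdot(X,\hat w)=\{(gXg^{-1},g\hat w):g\in G\}$.
   Context: $\underline{G}$ is $G\times V$ with product $(g_1,v_1)(g_2,v_2)=(g_1g_2,g_1v_2+v_1)$ and adjoint action $\mathrm{Ad}(g,v)(X,w)=(gXg^{-1},-(gXg^{-1})v+gw)$. Write $\lambda=(b_1^{d_1}\cdots b_r^{d_r})$ with $b_1>\dots>b_r$ (each $b_i$ occurring $d_i>0$ times), $d_0=0$; an enhanced partition $\lambda[q]$ has $q\in\{d_0+\dots+d_{j-1}:1\le j\le r+1\}$. With $u_j=v_{d_1+\dots+d_j}$ ($1\le j\le r$), $u_{r+1}=0$, $\mathcal{O}_{\lambda[q]}$ is the $\underline{G}$-orbit of $(X,u_j)$ where $q=d_0+\dots+d_{j-1}$. Closures are Zariski closures in $\mathfrak{gl}(V)\times V$. *)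

theory Defs
  imports "HOL-Analysis.Analysis" "HOL-Computational_Algebra.Polynomial"
begin

inductive_set polyfun :: "((('a::field^'n^'n) \<times> ('a^'n)) \<Rightarrow> 'a) set" where
  pf_const: "(\<lambda>p. c) \<in> polyfun"
| pf_mat:   "(\<lambda>p. fst p $ i $ j) \<in> polyfun"
| pf_vec:   "(\<lambda>p. snd p $ i) \<in> polyfun"
| pf_add:   "f \<in> polyfun \<Longrightarrow> g \<in> polyfun \<Longrightarrow> (\<lambda>p. f p + g p) \<in> polyfun"
| pf_mult:  "f \<in> polyfun \<Longrightarrow> g \<in> polyfun \<Longrightarrow> (\<lambda>p. f p * g p) \<in> polyfun"

definition zariski_closed :: "(('a::field^'n^'n) \<times> ('a^'n)) set \<Rightarrow> bool" where
  "zariski_closed S \<longleftrightarrow> (\<exists>F. F \<subseteq> polyfun \<and> S = {p. \<forall>f\<in>F. f p = 0})"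

definition zariski_closure :: "(('a::field^'n^'n) \<times> ('a^'n)) set \<Rightarrow> (('a^'n^'n) \<times> ('a^'n)) set" where
  "zariski_closure A = \<Inter>{S. zariski_closed S \<and> A \<subseteq> S}"

definition Ad_sdp :: "'a::field^'n^'n \<Rightarrow> 'a^'n \<Rightarrow> (('a^'n^'n) \<times> ('a^'n)) \<Rightarrow> (('a^'n^'n) \<times> ('a^'n))" where
  "Ad_sdp g v p = (let Y = g ** fst p ** matrix_inv g in (Y, - (Y *v v) + g *v snd p))"

definition sdp_orbit :: "(('a::field^'n^'n) \<times> ('a^'n)) \<Rightarrow> (('a^'n^'n) \<times> ('a^'n)) set" where
  "sdp_orbit p = {Ad_sdp g v p | g v. invertible g}"

definition GL_orbit :: "(('a::field^'n^'n) \<times> ('a^'n)) \<Rightarrow> (('a^'n^'n) \<times> ('a^'n)) set" where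
  "GL_orbit p = {(g ** fst p ** matrix_inv g, g *v snd p) | g. invertible g}"

definition mpow_app :: "'a::field^'n^'n \<Rightarrow> nat \<Rightarrow> 'a^'n \<Rightarrow> 'a^'n" where
  "mpow_app X k w = ((\<lambda>x. X *v x) ^^ k) w"

definition is_partition :: "nat \<Rightarrow> (nat \<Rightarrow> nat) \<Rightarrow> nat \<Rightarrow> bool" where
  "is_partition m a t \<longleftrightarrow> (\<forall>i\<in>{1..t}. a i > 0) \<and> (\<forall>i j. 1 \<le> i \<longrightarrow> i \<le> j \<longrightarrow> j \<le> t \<longrightarrow> a j \<le> a i)
     \<and> (\<Sum>i=1..t. a i) = m"

definition jb_index :: "(nat \<Rightarrow> nat) \<Rightarrow> nat \<Rightarrow> (nat \<times> nat) set" where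
  "jb_index a t = {(i,k). 1 \<le> i \<and> i \<le> t \<and> k < a i}"

definition jordan_basis :: "'a::field^'n^'n \<Rightarrow> (nat \<Rightarrow> nat) \<Rightarrow> nat \<Rightarrow> (nat \<Rightarrow> 'a^'n) \<Rightarrow> bool" where
  "jordan_basis X a t v \<longleftrightarrow>
     (\<forall>i\<in>{1..t}. mpow_app X (a i) (v i) = 0) \<and>
     inj_on (\<lambda>(i,k). mpow_app X k (v i)) (jb_index a t) \<and>
     vec.independent ((\<lambda>(i,k). mpow_app X k (v i)) ` jb_index a t) \<and>
     vec.span ((\<lambda>(i,k). mpow_app X k (v i)) ` jb_index a t) = UNIV"

text \<open>Enhanced partition \<lambda>[q]: q = d_0 + ... + d_{j-1} for some 1 \<le> j \<le> r+1, i.e. q is 0, t,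
  or a boundary between two distinct part sizes.\<close>
definition enhanced_index :: "(nat \<Rightarrow> nat) \<Rightarrow> nat \<Rightarrow> nat \<Rightarrow> bool" where
  "enhanced_index a t q \<longleftrightarrow> q \<le> t \<and> (q = 0 \<or> q = t \<or> a (Suc q) < a q)"

text \<open>The vector u_j = v_{d_1+...+d_j} where q = d_0+...+d_{j-1} (u_{r+1} = 0): the generator of the
  last Jordan block of size b_j = a_{q+1}.\<close>
definition enh_vec :: "(nat \<Rightarrow> nat) \<Rightarrow> nat \<Rightarrow> (nat \<Rightarrow> 'a::field^'n) \<Rightarrow> nat \<Rightarrow> 'a^'n" where
  "enh_vec a t v q = (if q = t then 0 else v (GREATEST i. i \<le> t \<and> a i = a (Suc q)))"

definition enh_orbit :: "'a::field^'n^'n \<Rightarrow> (nat \<Rightarrow> nat) \<Rightarrow> nat \<Rightarrow> (nat \<Rightarrow> 'a^'n) \<Rightarrow> nat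
     \<Rightarrow> (('a^'n^'n) \<times> ('a^'n)) set" where
  "enh_orbit X a t v q = sdp_orbit (X, enh_vec a t v q)"

end

theory Submission
  imports Defs
begin



lemma mpow_app_0[simp]: "mpow_app X 0 w = w" by (simp add: mpow_app_def)
lemma mpow_app_Suc: "mpow_app X (Suc k) w = X *v mpow_app X k w"
  by (simp add: mpow_app_def)
lemma mpow_app_Suc_right: "mpow_app X (Suc k) w = mpow_app X k (X *v w)"
  by (simp add: mpow_app_def funpow_Suc_right del: funpow.simps)
lemma mpow_app_add: "mpow_app X (j + k) w = mpow_app X j (mpow_app X k w)"
  by (simp add: mpow_app_def funpow_add)

definition Xp :: "'a::field^'n^'n \<Rightarrow> nat \<Rightarrow> 'a^'n^'n" where
  "Xp X k = ((\<lambda>A. X ** A) ^^ k) (mat 1)"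

lemma mpow_app_Xp: "mpow_app X k w = Xp X k *v w"
  by (induction k) (simp_all add: mpow_app_def Xp_def matrix_vector_mul_assoc[symmetric])

lemma mpow_lin:
  "mpow_app X k (x + y) = mpow_app X k x + mpow_app X k y"
  "mpow_app X k (c *s x) = c *s mpow_app X k x"
  "mpow_app X k (- x) = - mpow_app X k x"
  "mpow_app X k (x - y) = mpow_app X k x - mpow_app X k y"
  "mpow_app X k 0 = 0"
  "mpow_app X k (sum f S) = (\<Sum>i\<in>S. mpow_app X k (f i))"
  by (simp_all add: mpow_app_Xp vec.add vec.scale vec.neg vec.diff vec.sum)

lemma comm_mpow:
  assumes "M ** X = X ** M"
  shows "M *v mpow_app X k w = mpow_app X k (M *v w)"
proof (induction k)
  case (Suc k)
  have "M *v mpow_app X (Suc k) w = (M ** X) *v mpow_app X k w"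
    by (simp add: mpow_app_Suc matrix_vector_mul_assoc)
  also have "\<dots> = X *v (M *v mpow_app X k w)" by (simp add: assms matrix_vector_mul_assoc)
  finally show ?case using Suc by (simp add: mpow_app_Suc)
qed simp

lemma matrix_inv_props:
  assumes "invertible (g::'a::field^'n^'n)"
  shows "g ** matrix_inv g = mat 1" "matrix_inv g ** g = mat 1"
  using someI_ex[OF assms[unfolded invertible_def]] unfolding matrix_inv_def by auto

lemma conj_eq:
  assumes "invertible (g::'a::field^'n^'n)" "g ** X = Y ** g"
  shows "g ** X ** matrix_inv g = Y"
  by (metis assms(2) matrix_inv_props(1)[OF assms(1)] matrix_mul_assoc matrix_mul_rid)




locale jbs =
  fixes X :: "'a::field^'n::finite^'n" and a :: "nat \<Rightarrow> nat" and t :: nat and v :: "nat \<Rightarrow> 'a^'n"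
  assumes part: "is_partition CARD('n) a t" and jb: "jordan_basis X a t v"
begin

abbreviation J where "J \<equiv> jb_index a t"
definition bf :: "nat \<times> nat \<Rightarrow> 'a^'n" where "bf = (\<lambda>(i,k). mpow_app X k (v i))"
abbreviation BB where "BB \<equiv> bf ` J"

lemma J_mem: "(i,k) \<in> J \<longleftrightarrow> 1 \<le> i \<and> i \<le> t \<and> k < a i" by (simp add: jb_index_def)

lemma indep: "vec.independent BB" and span: "vec.span BB = UNIV" and injb: "inj_on bf J"
  and kill: "i \<in> {1..t} \<Longrightarrow> mpow_app X (a i) (v i) = 0"
  using jb unfolding jordan_basis_def bf_def by auto

lemma apos: "i \<in> {1..t} \<Longrightarrow> 0 < a i" using part unfolding is_partition_def by auto
lemma amono: "1 \<le> i \<Longrightarrow> i \<le> j \<Longrightarrow> j \<le> t \<Longrightarrow> a j \<le> a i" using part unfolding is_partition_def by auto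
lemma asum: "(\<Sum>i=1..t. a i) = CARD('n)" using part unfolding is_partition_def by auto

lemma finJ: "finite J"
proof -
  have "J \<subseteq> {1..t} \<times> {..<CARD('n)}"
  proof
    fix x assume "x \<in> J"
    then obtain i k where x: "x = (i,k)" "1 \<le> i" "i \<le> t" "k < a i" by (cases x) (auto simp: J_mem)
    have "a i \<le> CARD('n)" unfolding asum[symmetric] by (rule member_le_sum) (use x in auto)
    then show "x \<in> {1..t} \<times> {..<CARD('n)}" using x by auto
  qed
  then show ?thesis by (rule finite_subset) auto
qed

lemma kill_ge: "i \<in> {1..t} \<Longrightarrow> a i \<le> p \<Longrightarrow> mpow_app X p (v i) = 0"
  using kill[of i] mpow_app_add[of X "p - a i" "a i" "v i"] by (simp add: mpow_lin)

definition bmat :: "(nat \<Rightarrow> nat \<Rightarrow> 'a^'n) \<Rightarrow> 'a^'n^'n" where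
  "bmat F = matrix (vec.construct BB (\<lambda>x. case inv_into J bf x of (i,k) \<Rightarrow> F i k))"

lemma bmat_basis: "(i,k) \<in> J \<Longrightarrow> bmat F *v mpow_app X k (v i) = F i k"
proof -
  assume ik: "(i,k) \<in> J"
  have "bmat F *v bf (i,k) = vec.construct BB (\<lambda>x. case inv_into J bf x of (i,k) \<Rightarrow> F i k) (bf (i,k))"
    unfolding bmat_def by (rule matrix_works[OF vec.linear_construct[OF indep]])
  also have "\<dots> = F i k"
    using ik by (subst vec.construct_basis[OF indep]) (auto simp: inv_into_f_f[OF injb])
  finally show ?thesis by (simp add: bf_def)
qed

lemma mat_ext:
  assumes "\<And>i k. (i,k) \<in> J \<Longrightarrow> A *v mpow_app X k (v i) = C *v mpow_app X k (v i)"
  shows "A = C"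
  unfolding matrix_eq
proof
  fix x
  show "A *v x = C *v x"
    by (rule vec.linear_eq_on_span[where B=BB]) (use assms span in \<open>auto simp: bf_def\<close>)
qed

lemma nilp: "mpow_app X CARD('n) x = 0"
proof -
  have "Xp X CARD('n) = 0"
  proof (rule mat_ext)
    fix i k assume ik: "(i,k) \<in> J"
    have le: "a i \<le> CARD('n)" unfolding asum[symmetric]
      by (rule member_le_sum) (use ik in \<open>auto simp: J_mem\<close>)
    have "Xp X CARD('n) *v mpow_app X k (v i) = mpow_app X (CARD('n) + k) (v i)"
      by (simp add: mpow_app_add mpow_app_Xp[symmetric])
    also have "\<dots> = 0" by (rule kill_ge) (use ik le in \<open>auto simp: J_mem\<close>)
    finally show "Xp X CARD('n) *v mpow_app X k (v i) = 0 *v mpow_app X k (v i)" by simp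
  qed
  then show ?thesis by (simp add: mpow_app_Xp)
qed

lemma bmat_comm:
  assumes "\<And>i. i \<in> {1..t} \<Longrightarrow> mpow_app X (a i) (\<phi> i) = 0"
  shows "bmat (\<lambda>i k. mpow_app X k (\<phi> i)) ** X = X ** bmat (\<lambda>i k. mpow_app X k (\<phi> i))"
proof (rule mat_ext)
  fix i k assume ik: "(i,k) \<in> J"
  let ?M = "bmat (\<lambda>i k. mpow_app X k (\<phi> i))"
  have "(?M ** X) *v mpow_app X k (v i) = ?M *v mpow_app X (Suc k) (v i)"
    by (simp add: matrix_vector_mul_assoc[symmetric] mpow_app_Suc)
  also have "\<dots> = mpow_app X (Suc k) (\<phi> i)"
  proof (cases "Suc k < a i")
    case True then show ?thesis using ik by (subst bmat_basis) (auto simp: J_mem)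
  next
    case False
    then have "Suc k = a i" using ik by (auto simp: J_mem)
    then show ?thesis using kill[of i] assms[of i] ik by (auto simp: J_mem)
  qed
  also have "\<dots> = (X ** ?M) *v mpow_app X k (v i)"
    using ik by (simp add: matrix_vector_mul_assoc[symmetric] mpow_app_Suc bmat_basis)
  finally show "(?M ** X) *v mpow_app X k (v i) = (X ** ?M) *v mpow_app X k (v i)" .
qed

lemma inv_lemma:
  assumes MX: "M ** X = X ** M" and DX: "D ** X = X ** D" and D'X: "D' ** X = X ** D'"
    and DD: "D' ** D = mat 1" and MD: "M = D + X ** Y"
  shows "invertible M"
proof -
  have step: "\<exists>z. x = mpow_app X j z" if Mx: "M *v x = 0" for x j
  proof (induction j)
    case 0 then show ?case by auto
  next
    case (Suc j)
    then obtain z where xz: "x = mpow_app X j z" by auto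
    have "0 = M *v x" using Mx by simp
    also have "\<dots> = mpow_app X j (M *v z)" using xz comm_mpow[OF MX] by simp
    also have "\<dots> = mpow_app X j (D *v z) + mpow_app X j (X *v (Y *v z))"
      by (simp add: MD matrix_vector_mult_add_rdistrib matrix_vector_mul_assoc[symmetric] mpow_lin)
    also have "\<dots> = D *v x + mpow_app X (Suc j) (Y *v z)"
      using xz comm_mpow[OF DX] by (simp add: mpow_app_Suc_right)
    finally have "D *v x = - mpow_app X (Suc j) (Y *v z)"
      by (simp add: eq_neg_iff_add_eq_0)
    then have "D' *v (D *v x) = - mpow_app X (Suc j) (D' *v (Y *v z))"
      by (simp add: comm_mpow[OF D'X] vec.neg)
    then have "x = mpow_app X (Suc j) (- (D' *v (Y *v z)))"
      by (simp add: matrix_vector_mul_assoc DD mpow_lin)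
    then show ?case by blast
  qed
  have "inj ((*v) M)"
  proof (rule injI)
    fix x y assume "M *v x = M *v y"
    then have "M *v (x - y) = 0" by (simp add: vec.diff)
    from step[OF this, of "CARD('n)"] nilp show "x = y" by auto
  qed
  then show ?thesis
    using matrix_left_invertible_injective invertible_left_inverse by blast
qed

end



lemma closure_I:
  assumes "\<And>f. f \<in> polyfun \<Longrightarrow> (\<forall>y\<in>A. f y = 0) \<Longrightarrow> f x = 0"
  shows "x \<in> zariski_closure A"
  unfolding zariski_closure_def
proof (rule InterI)
  fix S assume "S \<in> {S. zariski_closed S \<and> A \<subseteq> S}"
  then obtain F where F: "F \<subseteq> polyfun" "S = {p. \<forall>f\<in>F. f p = 0}" and A: "A \<subseteq> S"
    unfolding zariski_closed_def by blast
  show "x \<in> S" using assms F A by blast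
qed

lemma closure_vanish:
  assumes "f \<in> polyfun" "\<forall>y\<in>A. f y = 0" "x \<in> zariski_closure A"
  shows "f x = 0"
proof -
  have "zariski_closed {p. f p = 0}" unfolding zariski_closed_def
    by (rule exI[of _ "{f}"]) (use assms in auto)
  then show ?thesis using assms unfolding zariski_closure_def by auto
qed

lemma closure_sub: "A \<subseteq> zariski_closure A"
  unfolding zariski_closure_def by auto

lemma closure_mono2:
  assumes "A \<subseteq> zariski_closure B"
  shows "zariski_closure A \<subseteq> zariski_closure B"
proof
  fix x assume x: "x \<in> zariski_closure A"
  show "x \<in> zariski_closure B"
  proof (rule closure_I)
    fix f assume f: "f \<in> polyfun" "\<forall>y\<in>B. f y = 0"
    have "\<forall>y\<in>A. f y = 0" using closure_vanish[OF f] assms by auto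
    then show "f x = 0" using closure_vanish[OF f(1) _ x] by auto
  qed
qed

lemma curve_poly:
  fixes Y :: "'a::field^'n^'n"
  assumes "f \<in> polyfun"
  shows "\<exists>P. \<forall>s. f (Y, y0 + s *s y1) = poly P s"
  using assms
proof (induction rule: polyfun.induct)
  case (pf_const c) then show ?case by (intro exI[of _ "[:c:]"]) auto
next
  case (pf_mat i j) then show ?case by (intro exI[of _ "[:Y $ i $ j:]"]) auto
next
  case (pf_vec i) then show ?case by (intro exI[of _ "[:y0 $ i, y1 $ i:]"]) (auto simp: algebra_simps)
next
  case (pf_add f g)
  then obtain P Q where "\<forall>s. f (Y, y0 + s *s y1) = poly P s" "\<forall>s. g (Y, y0 + s *s y1) = poly Q s" by blast
  then show ?case by (intro exI[of _ "P + Q"]) auto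
next
  case (pf_mult f g)
  then obtain P Q where "\<forall>s. f (Y, y0 + s *s y1) = poly P s" "\<forall>s. g (Y, y0 + s *s y1) = poly Q s" by blast
  then show ?case by (intro exI[of _ "P * Q"]) auto
qed

lemma curve_zero:
  fixes Y :: "'a::field^'n^'n"
  assumes "f \<in> polyfun" "infinite {s. f (Y, y0 + s *s y1) = 0}"
  shows "f (Y, y0) = 0"
proof -
  obtain P where P: "\<forall>s. f (Y, y0 + s *s y1) = poly P s" using curve_poly[OF assms(1)] by blast
  have "P = 0" using assms(2) poly_roots_finite[of P] P by auto
  then show ?thesis using P[rule_format, of 0] by simp
qed

lemma infinite_alg: "infinite (UNIV :: 'a::alg_closed_field set)"
proof
  assume fin: "finite (UNIV :: 'a set)"
  define p :: "'a poly" where "p = [:1:] + (\<Prod>x\<in>UNIV. [:-x, 1:])"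
  have dprod: "degree (\<Prod>x\<in>(UNIV::'a set). [:-x, 1:]) = card (UNIV :: 'a set)"
    by (subst degree_prod_eq_sum_degree) auto
  have "card (UNIV :: 'a set) > 0" using fin by (simp add: card_gt_0_iff)
  then have "degree p > 0" unfolding p_def
    by (subst degree_add_eq_right) (simp_all add: dprod)
  then obtain x where "poly p x = 0" using alg_closed_imp_poly_has_root by blast
  moreover have "poly p x = 1" unfolding p_def
    using fin by (simp add: poly_prod prod_zero_iff)
  ultimately show False by simp
qed




lemma mpow_comm: "mpow_app X p (mpow_app X k w) = mpow_app X k (mpow_app X p w)"
  by (metis add.commute mpow_app_add)

lemma sum_split_q:
  assumes "q \<le> (t::nat)"
  shows "(\<Sum>i=1..t. f i) = (\<Sum>i=1..q. f i) + (\<Sum>i=Suc q..t. f i)"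
proof -
  have "{1..t} = {1..q} \<union> {Suc q..t}" using assms by auto
  then show ?thesis by (simp add: sum.union_disjoint)
qed

locale jbq = jbs X a t v for X :: "'a::field^'n::finite^'n" and a t v +
  fixes q :: nat
  assumes qt: "q \<le> t"
begin

definition what where "what = (\<Sum>i=1..q. \<Sum>k=1..<a i. mpow_app X k (v i)) +
            (\<Sum>i=Suc q..t. \<Sum>k=0..<a i. mpow_app X k (v i))"
definition w0 where "w0 = (\<Sum>i=1..q. X *v v i) + (\<Sum>i=Suc q..t. v i)"
definition ee where "ee i = (\<Sum>k=0..<a i. mpow_app X k (v i))"

lemma ee_rel: "i \<in> {1..t} \<Longrightarrow> X *v ee i = ee i - v i"
proof -
  assume i: "i \<in> {1..t}"
  have "X *v ee i = (\<Sum>k<a i. mpow_app X (Suc k) (v i))"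
    by (simp add: ee_def vec.sum mpow_app_Suc atLeast0LessThan)
  also have "\<dots> + v i = (\<Sum>k<Suc (a i). mpow_app X k (v i))"
    by (subst sum.lessThan_Suc_shift) simp
  also have "\<dots> = ee i" using kill[OF i] by (simp add: ee_def atLeast0LessThan)
  finally show ?thesis by (simp add: eq_diff_eq)
qed

lemma ee_1: "i \<in> {1..t} \<Longrightarrow> (\<Sum>k=1..<a i. mpow_app X k (v i)) = ee i - v i"
  using apos[of i] by (simp add: ee_def sum.atLeast_Suc_lessThan[of 0])

lemma what_w0: "what - X *v what = w0"
proof -
  have h1: "(\<Sum>i=1..q. \<Sum>k=1..<a i. mpow_app X k (v i)) = (\<Sum>i=1..q. ee i - v i)"
  proof (rule sum.cong[OF refl])
    fix i assume "i \<in> {1..q}"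
    then show "(\<Sum>k=1..<a i. mpow_app X k (v i)) = ee i - v i" by (intro ee_1) (use qt in auto)
  qed
  have h2: "(\<Sum>i=Suc q..t. \<Sum>k=0..<a i. mpow_app X k (v i)) = (\<Sum>i=Suc q..t. ee i)"
    by (simp add: ee_def)
  have wh: "what = (\<Sum>i=1..q. ee i - v i) + (\<Sum>i=Suc q..t. ee i)"
    unfolding what_def h1 h2 ..
  have "what - X *v what = (\<Sum>i=1..q. (ee i - v i) - X *v (ee i - v i)) + (\<Sum>i=Suc q..t. ee i - X *v ee i)"
  proof -
    have "X *v what = (\<Sum>i=1..q. X *v (ee i - v i)) + (\<Sum>i=Suc q..t. X *v ee i)"
      unfolding wh by (simp only: vec.add vec.sum)
    then show ?thesis by (simp add: wh sum_subtractf)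
  qed
  also have "\<dots> = w0" unfolding w0_def using qt
    by (intro arg_cong2[where f="(+)"] sum.cong) (auto simp: vec.diff ee_rel)
  finally show ?thesis .
qed

definition m where "m = (GREATEST i. i \<le> t \<and> a i = a (Suc q))"

lemma m_props: assumes "q < t" shows "Suc q \<le> m" "m \<le> t" "a m = a (Suc q)"
proof -
  have ex: "Suc q \<le> t \<and> a (Suc q) = a (Suc q)" using assms by auto
  have bd: "\<forall>y. y \<le> t \<and> a y = a (Suc q) \<longrightarrow> y \<le> t" by auto
  show "Suc q \<le> m" unfolding m_def by (rule Greatest_le_nat[of "\<lambda>i. i \<le> t \<and> a i = a (Suc q)" "Suc q" t]) (use ex in auto)
  have "m \<le> t \<and> a m = a (Suc q)" unfolding m_def by (rule GreatestI_nat[of "\<lambda>i. i \<le> t \<and> a i = a (Suc q)" "Suc q" t]) (use ex in auto)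
  then show "m \<le> t" "a m = a (Suc q)" by auto
qed

definition u where "u = enh_vec a t v q"

lemma u_eq: "q < t \<Longrightarrow> u = v m" "q = t \<Longrightarrow> u = 0"
  unfolding u_def enh_vec_def m_def by auto

lemma u_sum: "(\<Sum>i=Suc q..t. (if q < t \<and> i = m then v i else 0)) = u"
proof (cases "q < t")
  case True then show ?thesis using m_props[OF True] u_eq(1)[OF True] by (simp add: sum.delta')
next
  case False then show ?thesis using qt u_eq(2) by simp
qed

lemma kill_big: "q < t \<Longrightarrow> i \<in> {Suc q..t} \<Longrightarrow> mpow_app X (a m) (v i) = 0"
  using m_props amono[of "Suc q" i] by (intro kill_ge) auto

end



context jbq begin

lemma basis0: "i \<in> {1..t} \<Longrightarrow> bmat F *v v i = F i 0"
  using bmat_basis[of i 0 F] apos[of i] by (simp add: J_mem)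

lemma gS: "\<exists>g. invertible g \<and> g ** X = X ** g \<and> g *v u = (\<Sum>i=Suc q..t. v i)"
proof (cases "q < t")
  case False
  then have "q = t" using qt by auto
  then show ?thesis using u_eq(2) by (intro exI[of _ "mat 1"]) (auto simp: invertible_def)
next
  case True
  note mp = m_props[OF True]
  define S where "S = (\<Sum>i=Suc q..t. v i)"
  define \<phi> where "\<phi> i = (if i = m then S else v i)" for i
  define \<psi> where "\<psi> i = (if i = m then v m + v m - S else v i)" for i
  define g where "g = bmat (\<lambda>i k. mpow_app X k (\<phi> i))"
  define h where "h = bmat (\<lambda>i k. mpow_app X k (\<psi> i))"
  have killS: "mpow_app X (a m) S = 0"
    unfolding S_def mpow_lin using kill_big[OF True] by (simp add: sum.neutral)
  have gX: "g ** X = X ** g" unfolding g_def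
    by (rule bmat_comm) (auto simp: \<phi>_def killS kill)
  have gv: "i \<in> {1..t} \<Longrightarrow> g *v v i = \<phi> i" for i unfolding g_def by (simp add: basis0)
  have gSS: "g *v S = S + S - v m"
  proof -
    have "g *v S = (\<Sum>i=Suc q..t. \<phi> i)" unfolding S_def vec.sum using gv qt
      by (intro sum.cong) auto
    also have "\<dots> = (\<Sum>i=Suc q..t. v i + (if i = m then S - v i else 0))"
      by (intro sum.cong) (auto simp: \<phi>_def)
    also have "\<dots> = S + (S - v m)" using mp by (simp add: sum.distrib S_def sum.delta')
    finally show ?thesis by simp
  qed
  have gpsi: "i \<in> {1..t} \<Longrightarrow> g *v \<psi> i = v i" for i
  proof (cases "i = m")
    case True
    have "m \<in> {1..t}" using mp by auto
    have psm: "\<psi> m = v m + v m - S" by (simp add: \<psi>_def)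
    have "g *v \<psi> i = g *v v m + g *v v m - g *v S"
      unfolding True psm vec.diff vec.add ..
    also have "\<dots> = S + S - (S + S - v m)" using gv[of m] `m \<in> {1..t}` gSS by (simp add: \<phi>_def)
    finally show ?thesis using True by simp
  next
    case False
    assume "i \<in> {1..t}" then show ?thesis using False gv[of i] by (simp add: \<psi>_def \<phi>_def)
  qed
  have "g ** h = mat 1"
  proof (rule mat_ext)
    fix i k assume ik: "(i,k) \<in> J"
    then have i: "i \<in> {1..t}" by (auto simp: J_mem)
    have "(g ** h) *v mpow_app X k (v i) = g *v mpow_app X k (\<psi> i)"
      using ik by (simp add: matrix_vector_mul_assoc[symmetric] h_def bmat_basis)
    also have "\<dots> = mpow_app X k (v i)" by (simp add: comm_mpow[OF gX] gpsi[OF i])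
    finally show "(g ** h) *v mpow_app X k (v i) = mat 1 *v mpow_app X k (v i)" by simp
  qed
  then have "invertible g" using invertible_right_inverse by blast
  moreover have "g *v u = S" using u_eq(1)[OF True] gv[of m] mp by (simp add: \<phi>_def)
  ultimately show ?thesis using gX S_def by blast
qed

lemma dir1: "\<exists>g w'. invertible g \<and> g ** X = X ** g \<and> g *v u - X *v w' = what"
proof -
  obtain g where g: "invertible g" "g ** X = X ** g" "g *v u = (\<Sum>i=Suc q..t. v i)"
    using gS by blast
  have "what = w0 + X *v what" using what_w0 by (metis diff_add_cancel)
  also have "\<dots> = (\<Sum>i=Suc q..t. v i) + X *v ((\<Sum>i=1..q. v i) + what)"
    by (simp add: w0_def vec.add vec.sum)
  finally have eq: "what = (\<Sum>i=Suc q..t. v i) + X *v ((\<Sum>i=1..q. v i) + what)" .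
  have "g *v u - X *v (- ((\<Sum>i=1..q. v i) + what)) = (\<Sum>i=Suc q..t. v i) + X *v ((\<Sum>i=1..q. v i) + what)"
    unfolding g(3) vec.neg by simp
  then have "g *v u - X *v (- ((\<Sum>i=1..q. v i) + what)) = what" using eq by simp
  then show ?thesis using g by blast
qed

end



lemma neg_mv: "(- A) *v (x::'a::field^'n) = - (A *v x)"
  by (simp add: vec_eq_iff matrix_vector_mult_def sum_negf)

lemma shift_sum:
  assumes "mpow_app X A v = 0"
  shows "(\<Sum>k<A. f k *s mpow_app X k v) = f 0 *s v + X *v (\<Sum>k<A. f (Suc k) *s mpow_app X k v)"
proof -
  have "(\<Sum>k<A. f k *s mpow_app X k v) = (\<Sum>k<Suc A. f k *s mpow_app X k v)"
    using assms by simp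
  also have "\<dots> = f 0 *s v + (\<Sum>k<A. f (Suc k) *s mpow_app X (Suc k) v)"
    by (subst sum.lessThan_Suc_shift) simp
  also have "\<dots> = f 0 *s v + X *v (\<Sum>k<A. f (Suc k) *s mpow_app X k v)"
    by (simp add: vec.sum vec.scale mpow_app_Suc)
  finally show ?thesis .
qed

context jbq begin

lemma kill_comb: "i \<in> {1..t} \<Longrightarrow> mpow_app X (a i) (\<Sum>k<a i. f k *s mpow_app X k (v i)) = 0"
  by (simp add: mpow_lin mpow_comm[of X "a i"] kill)

lemma w_decomp: "\<exists>cc. w = (\<Sum>i=1..t. \<Sum>k<a i. cc i k *s mpow_app X k (v i))"
proof -
  have "w \<in> vec.span BB" using span by simp
  then obtain c where c: "w = (\<Sum>x\<in>BB. c x *s x)"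
    using vec.span_finite[OF finite_imageI[OF finJ]] by auto
  also have "\<dots> = (\<Sum>x\<in>J. c (bf x) *s bf x)"
    by (simp add: sum.reindex[OF injb])
  also have "J = Sigma {1..t} (\<lambda>i. {..<a i})" by (auto simp: J_mem)
  also have "(\<Sum>x\<in>Sigma {1..t} (\<lambda>i. {..<a i}). c (bf x) *s bf x) =
      (\<Sum>i=1..t. \<Sum>k<a i. c (bf (i,k)) *s mpow_app X k (v i))"
    by (subst sum.Sigma) (auto simp: bf_def intro!: sum.cong split: prod.split)
  finally show ?thesis by (intro exI[of _ "\<lambda>i k. c (bf (i,k))"])
qed

lemma dir2:
  assumes inf: "infinite (UNIV :: 'a set)"
  shows "\<exists>z. infinite {s. \<exists>K. invertible K \<and> K ** X = X ** K \<and> K *v what = u + X *v w + s *s z}"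
proof -
  obtain cc where wdec: "w = (\<Sum>i=1..t. \<Sum>k<a i. cc i k *s mpow_app X k (v i))"
    using w_decomp by blast
  define y where "y i = (\<Sum>k<a i. cc i k *s mpow_app X k (v i))" for i
  define y' where "y' i = (\<Sum>k<a i. cc i (Suc k) *s mpow_app X k (v i))" for i
  have ykill: "i \<in> {1..t} \<Longrightarrow> mpow_app X (a i) (y i) = 0" for i unfolding y_def by (rule kill_comb)
  have y'kill: "i \<in> {1..t} \<Longrightarrow> mpow_app X (a i) (y' i) = 0" for i unfolding y'_def by (rule kill_comb)
  have yshift: "i \<in> {1..t} \<Longrightarrow> y i = cc i 0 *s v i + X *v y' i" for i
    unfolding y_def y'_def by (rule shift_sum) (rule kill)
  have Xw: "X *v w = (\<Sum>i=1..t. X *v y i)" unfolding wdec y_def by (simp add: vec.sum)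
  define ism where "ism i = (q < t \<and> i = m)" for i
  define z where "z = (\<Sum>i=1..q. X *v v i) + (\<Sum>i=Suc q..t. (if ism i then 0 else v i))"
  define good where "good = {s. s \<noteq> 0 \<and> (\<forall>i\<in>{1..t}. s + cc i 0 \<noteq> 0)}"
  have "UNIV - insert 0 ((\<lambda>i. - cc i 0) ` {1..t}) \<subseteq> good"
  proof
    fix s assume s: "s \<in> UNIV - insert 0 ((\<lambda>i. - cc i 0) ` {1..t})"
    have "s + cc i 0 \<noteq> 0" if i: "i \<in> {1..t}" for i
    proof
      assume "s + cc i 0 = 0"
      then have "s = - cc i 0" by (simp add: eq_neg_iff_add_eq_0)
      then show False using s i by auto
    qed
    then show "s \<in> good" using s unfolding good_def by auto
  qed
  moreover have "infinite (UNIV - insert 0 ((\<lambda>i. - cc i 0) ` {1..t}))"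
    using inf by (simp add: Diff_infinite_finite)
  ultimately have infg: "infinite good" using infinite_super by blast
  have "good \<subseteq> {s. \<exists>K. invertible K \<and> K ** X = X ** K \<and> K *v what = u + X *v w + s *s z}"
  proof
    fix s assume "s \<in> good"
    then have s0: "s \<noteq> 0" and sc: "\<And>i. i \<in> {1..t} \<Longrightarrow> s + cc i 0 \<noteq> 0" unfolding good_def by auto
    define lam where "lam i = (if i \<le> q then s + cc i 0 else if ism i then 1 else s)" for i
    define eta where "eta i = (if i \<le> q then y' i else y i)" for i
    define phi where "phi i = lam i *s v i + X *v eta i" for i
    have lam0: "i \<in> {1..t} \<Longrightarrow> lam i \<noteq> 0" for i using s0 sc[of i] by (auto simp: lam_def)
    have etakill: "i \<in> {1..t} \<Longrightarrow> mpow_app X (a i) (eta i) = 0" for i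
      using ykill y'kill by (auto simp: eta_def)
    define M where "M = bmat (\<lambda>i k. mpow_app X k (phi i))"
    define D where "D = bmat (\<lambda>i k. mpow_app X k (lam i *s v i))"
    define D' where "D' = bmat (\<lambda>i k. mpow_app X k (inverse (lam i) *s v i))"
    define Ym where "Ym = bmat (\<lambda>i k. mpow_app X k (eta i))"
    have MX: "M ** X = X ** M" unfolding M_def
      by (rule bmat_comm) (simp add: phi_def mpow_lin kill mpow_app_Suc_right[symmetric]
          mpow_app_Suc etakill)
    have DX: "D ** X = X ** D" unfolding D_def by (rule bmat_comm) (simp add: mpow_lin kill)
    have D'X: "D' ** X = X ** D'" unfolding D'_def by (rule bmat_comm) (simp add: mpow_lin kill)
    have DD: "D' ** D = mat 1"
    proof (rule mat_ext)
      fix i k assume ik: "(i,k) \<in> J"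
      then have i: "i \<in> {1..t}" by (auto simp: J_mem)
      have "(D' ** D) *v mpow_app X k (v i) = D' *v mpow_app X k (lam i *s v i)"
        using ik by (simp add: matrix_vector_mul_assoc[symmetric] D_def bmat_basis)
      also have "\<dots> = mpow_app X k (lam i *s (D' *v v i))"
        by (simp add: comm_mpow[OF D'X] vec.scale)
      also have "\<dots> = mpow_app X k (v i)" using lam0[OF i] i by (simp add: D'_def basis0)
      finally show "(D' ** D) *v mpow_app X k (v i) = mat 1 *v mpow_app X k (v i)" by simp
    qed
    have MD: "M = D + X ** Ym"
    proof (rule mat_ext)
      fix i k assume ik: "(i,k) \<in> J"
      show "M *v mpow_app X k (v i) = (D + X ** Ym) *v mpow_app X k (v i)"
        using ik by (simp add: M_def D_def Ym_def bmat_basis matrix_vector_mult_add_rdistrib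
            matrix_vector_mul_assoc[symmetric] phi_def mpow_lin mpow_app_Suc[symmetric]
            mpow_app_Suc_right)
    qed
    have Minv: "invertible M" by (rule inv_lemma[OF MX DX D'X DD MD])
    define E where "E = (mat 1 - X :: 'a^'n^'n)"
    have EX: "E ** X = X ** E" unfolding E_def matrix_eq
      by (simp add: matrix_vector_mul_assoc[symmetric] matrix_vector_mult_diff_rdistrib vec.diff)
    have Einv: "invertible E"
      by (rule inv_lemma[OF EX, of "mat 1" "mat 1" "- mat 1"]) 
        (simp_all add: E_def matrix_eq matrix_vector_mult_diff_rdistrib matrix_vector_mult_add_rdistrib
          matrix_vector_mul_assoc[symmetric] vec.neg neg_mv)
    define K where "K = M ** E"
    have Kinv: "invertible K" unfolding K_def by (rule invertible_mult[OF Minv Einv])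
    have KX: "K ** X = X ** K" unfolding K_def
      by (metis EX MX matrix_mul_assoc)
    have Kw: "K *v what = M *v w0"
      using what_w0 by (simp add: K_def E_def matrix_vector_mul_assoc[symmetric] matrix_vector_mult_diff_rdistrib)
    have Mv: "i \<in> {1..t} \<Longrightarrow> M *v v i = phi i" for i by (simp add: M_def basis0)
    have MXv: "M *v (X *v x) = X *v (M *v x)" for x
      by (simp add: matrix_vector_mul_assoc MX)
    have mw0: "M *v w0 = (\<Sum>i=1..q. X *v phi i) + (\<Sum>i=Suc q..t. phi i)"
      unfolding w0_def vec.add vec.sum MXv using qt
      by (intro arg_cong2[where f="(+)"] sum.cong) (auto simp: Mv)
    have pa: "X *v phi i = X *v y i + s *s (X *v v i)" if i: "i \<in> {1..q}" for i
    proof -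
      have it: "i \<in> {1..t}" using i qt by auto
      have "phi i = s *s v i + y i"
        using i by (simp add: phi_def lam_def eta_def yshift[OF it] vec.scale_left_distrib)
      then show ?thesis by (simp add: vec.add vec.scale)
    qed
    have pb: "phi i = (if ism i then v i else 0) + X *v y i + s *s (if ism i then 0 else v i)"
      if i: "i \<in> {Suc q..t}" for i
      using i by (cases "ism i") (auto simp: phi_def lam_def eta_def)
    have sa: "(\<Sum>i=1..q. X *v phi i) = (\<Sum>i=1..q. X *v y i) + s *s (\<Sum>i=1..q. X *v v i)"
    proof -
      have "(\<Sum>i=1..q. X *v phi i) = (\<Sum>i=1..q. X *v y i + s *s (X *v v i))"
        by (rule sum.cong) (auto simp: pa)
      then show ?thesis by (simp only: sum.distrib vec.scale_sum_right)
    qed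
    have sb: "(\<Sum>i=Suc q..t. phi i) = (\<Sum>i=Suc q..t. (if ism i then v i else 0))
        + (\<Sum>i=Suc q..t. X *v y i) + s *s (\<Sum>i=Suc q..t. (if ism i then 0 else v i))"
    proof -
      have "(\<Sum>i=Suc q..t. phi i) = (\<Sum>i=Suc q..t. (if ism i then v i else 0) + X *v y i + s *s (if ism i then 0 else v i))"
        by (rule sum.cong) (auto simp: pb)
      then show ?thesis by (simp only: sum.distrib vec.scale_sum_right)
    qed
    have uu: "u = (\<Sum>i=Suc q..t. (if ism i then v i else 0))" unfolding ism_def u_sum ..
    have tgt: "u + X *v w + s *s z = (\<Sum>i=Suc q..t. (if ism i then v i else 0))
       + ((\<Sum>i=1..q. X *v y i) + (\<Sum>i=Suc q..t. X *v y i))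
       + (s *s (\<Sum>i=1..q. X *v v i) + s *s (\<Sum>i=Suc q..t. (if ism i then 0 else v i)))"
      unfolding uu Xw z_def vec.scale_right_distrib sum_split_q[OF qt, of "\<lambda>i. X *v y i"] ..
    have "K *v what = u + X *v w + s *s z"
      unfolding Kw mw0 sa sb tgt by (simp only: add.assoc add.commute add.left_commute)
    then show "s \<in> {s. \<exists>K. invertible K \<and> K ** X = X ** K \<and> K *v what = u + X *v w + s *s z}"
      using Kinv KX by blast
  qed
  then show ?thesis using infg infinite_super by blast
qed

end



lemma conj_prod:
  assumes "invertible (h::'a::field^'n^'n)" "g ** X = X ** g"
  shows "(h ** g) ** X = (h ** X ** matrix_inv h) ** (h ** g)"
proof -
  have "(h ** X ** matrix_inv h) ** (h ** g) = h ** X ** (matrix_inv h ** h) ** g"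
    by (simp add: matrix_mul_assoc)
  also have "\<dots> = h ** (g ** X)" by (simp add: matrix_inv_props(2)[OF assms(1)] matrix_mul_assoc assms(2))
  finally show ?thesis by (simp add: matrix_mul_assoc)
qed

theorem proposition4p12:
  fixes X :: "'a::alg_closed_field^'n::finite^'n"
    and a :: "nat \<Rightarrow> nat" and t q :: nat
    and v :: "nat \<Rightarrow> 'a^'n"
  assumes part: "is_partition CARD('n) a t"
    and enh: "enhanced_index a t q"
    and jb: "jordan_basis X a t v"
  shows "zariski_closure (enh_orbit X a t v q) =
         zariski_closure (GL_orbit (X,
            (\<Sum>i=1..q. \<Sum>k=1..<a i. mpow_app X k (v i)) +
            (\<Sum>i=Suc q..t. \<Sum>k=0..<a i. mpow_app X k (v i))))"
proof -
  have qt: "q \<le> t" using enh by (simp add: enhanced_index_def)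
  interpret jbq X a t v q by unfold_locales (use part jb qt in auto)
  have lhs: "enh_orbit X a t v q = sdp_orbit (X, u)" by (simp add: enh_orbit_def u_def)
  have rhs: "(\<Sum>i=1..q. \<Sum>k=1..<a i. mpow_app X k (v i)) +
            (\<Sum>i=Suc q..t. \<Sum>k=0..<a i. mpow_app X k (v i)) = what" by (simp add: what_def)
  have sub1: "GL_orbit (X, what) \<subseteq> sdp_orbit (X, u)"
  proof
    fix p assume "p \<in> GL_orbit (X, what)"
    then obtain h where h: "invertible h" "p = (h ** X ** matrix_inv h, h *v what)"
      unfolding GL_orbit_def by auto
    obtain g w' where g: "invertible g" "g ** X = X ** g" "g *v u - X *v w' = what"
      using dir1 by blast
    define Y where "Y = h ** X ** matrix_inv h"
    have hg: "invertible (h ** g)" by (rule invertible_mult[OF h(1) g(1)])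
    have Yeq: "(h ** g) ** X ** matrix_inv (h ** g) = Y"
      unfolding Y_def by (rule conj_eq[OF hg conj_prod[OF h(1) g(2)]])
    have hh: "Y ** h = h ** X" unfolding Y_def
      by (metis matrix_inv_props(2)[OF h(1)] matrix_mul_assoc matrix_mul_rid)
    have Yh: "Y *v (h *v w') = h *v (X *v w')"
      by (simp add: matrix_vector_mul_assoc hh)
    have "Ad_sdp (h ** g) (h *v w') (X, u) = (Y, h *v what)"
      unfolding Ad_sdp_def Let_def fst_conv snd_conv Yeq Yh g(3)[symmetric]
      by (simp add: vec.diff matrix_vector_mul_assoc[symmetric])
    then have "p = Ad_sdp (h ** g) (h *v w') (X, u)" using h(2) Y_def by simp
    then show "p \<in> sdp_orbit (X, u)" unfolding sdp_orbit_def using hg by blast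
  qed
  have sub2: "sdp_orbit (X, u) \<subseteq> zariski_closure (GL_orbit (X, what))"
  proof
    fix p assume "p \<in> sdp_orbit (X, u)"
    then obtain G vv where G: "invertible G" "p = Ad_sdp G vv (X, u)"
      unfolding sdp_orbit_def by auto
    define Y where "Y = G ** X ** matrix_inv G"
    define w where "w = - (matrix_inv G *v vv)"
    have "p = (Y, G *v (u + X *v w))"
      unfolding G(2) Ad_sdp_def Let_def Y_def w_def
      by (simp add: vec.add vec.neg vec.diff matrix_vector_mul_assoc[symmetric] matrix_inv_props(1)[OF G(1)]
          matrix_mul_assoc)
    moreover have "(Y, G *v (u + X *v w)) \<in> zariski_closure (GL_orbit (X, what))"
    proof (rule closure_I)
      fix f assume f: "f \<in> polyfun" "\<forall>y\<in>GL_orbit (X, what). f y = 0"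
      obtain z where z: "infinite {s. \<exists>K. invertible K \<and> K ** X = X ** K \<and> K *v what = u + X *v w + s *s z}"
        using dir2[OF infinite_alg] by blast
      have "{s. \<exists>K. invertible K \<and> K ** X = X ** K \<and> K *v what = u + X *v w + s *s z}
          \<subseteq> {s. f (Y, G *v (u + X *v w) + s *s (G *v z)) = 0}"
      proof
        fix s assume "s \<in> {s. \<exists>K. invertible K \<and> K ** X = X ** K \<and> K *v what = u + X *v w + s *s z}"
        then obtain K where K: "invertible K" "K ** X = X ** K" "K *v what = u + X *v w + s *s z" by auto
        have GK: "invertible (G ** K)" by (rule invertible_mult[OF G(1) K(1)])
        have "(G ** K) ** X ** matrix_inv (G ** K) = Y"
          unfolding Y_def by (rule conj_eq[OF GK conj_prod[OF G(1) K(2)]])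
        moreover have "(G ** K) *v what = G *v (u + X *v w) + s *s (G *v z)"
          by (simp add: matrix_vector_mul_assoc[symmetric] K(3) vec.add vec.scale)
        ultimately have "(Y, G *v (u + X *v w) + s *s (G *v z)) \<in> GL_orbit (X, what)"
          unfolding GL_orbit_def using GK by force
        then show "s \<in> {s. f (Y, G *v (u + X *v w) + s *s (G *v z)) = 0}" using f by auto
      qed
      then have "infinite {s. f (Y, G *v (u + X *v w) + s *s (G *v z)) = 0}"
        using z infinite_super by blast
      then show "f (Y, G *v (u + X *v w)) = 0" by (rule curve_zero[OF f(1)])
    qed
    ultimately show "p \<in> zariski_closure (GL_orbit (X, what))" by simp
  qed
  have "zariski_closure (sdp_orbit (X, u)) = zariski_closure (GL_orbit (X, what))"
  proof
    show "zariski_closure (sdp_orbit (X, u)) \<subseteq> zariski_closure (GL_orbit (X, what))"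
      by (rule closure_mono2[OF sub2])
    show "zariski_closure (GL_orbit (X, what)) \<subseteq> zariski_closure (sdp_orbit (X, u))"
      by (rule closure_mono2) (use sub1 closure_sub in blast)
  qed
  then show ?thesis unfolding lhs rhs .
qed



end
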